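(* Let $X$, $Y$ be disjoint sets of cardinality at least two, $M\le\mathrm{Sym}(X)$ and $N\le\mathrm{Sym}(Y)$ nontrivial permutation groups, $T$ the $(|X|,|Y|)$-biregular tree and $c$ a legal colouring of $X$ and $Y$. For each vertex $v$ write $c(\overline{A}(v))$ for the unique colour of the arcs terminating at $v$. Then two vertices $v,v'\in V_X$ lie in the same orbit of $U_c(M,N)$ if and only if $c(\overline{A}(v))$ and $c(\overline{A}(v'))$ lie in the same orbit of $N$; and two vertices $v,v'\in V_Y$ lie in the same orbit of $U_c(M,N)$ if and only if $c(\overline{A}(v))$ and $c(\overline{A}(v'))$ lie in the same orbit of $M$.
   Context: $T$ has natural bipartition $VT=V_X\sqcup V_Y$ (vertices in $V_X$ have valency $|X|$, in $V_Y$ valency $|Y|$). $A(v)$, $\overline{A}(v)$ are the sets of arcs (ordered pairs of adjacent vertices) with origin, resp. terminus, $v$. A legal colouring is a map $c:AT\to X\cup Y$ restricting to a bijection $A(v)\to X$ for $v\in V_X$, to a bijection $A(v)\to Y$ for $v\in V_Y$, and constant on each $\overline{A}(v)$. $U_c(M,N)$ is the group of $g\in\mathrm{Aut}(T)$ with $gV_X=V_X$ and $c|_{A(gv)}\circ g|_{A(v)}\circ(c|_{A(v)})^{-1}$ in $M$ for $v\in V_X$ and in $N$ for $v\in V_Y$. *)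

theory Defs
  imports "HOL-Algebra.Bij"
begin

text \<open>Graphs are given by an adjacency relation on a vertex type; the vertex set is UNIV.
Arcs are ordered pairs of adjacent vertices.\<close>

definition is_cycle :: "('v \<Rightarrow> 'v \<Rightarrow> bool) \<Rightarrow> 'v list \<Rightarrow> bool" where
  "is_cycle adj xs \<longleftrightarrow> length xs \<ge> 3 \<and> distinct xs \<and>
     (\<forall>i < length xs. adj (xs ! i) (xs ! ((i + 1) mod length xs)))"

definition is_tree :: "('v \<Rightarrow> 'v \<Rightarrow> bool) \<Rightarrow> bool" where
  "is_tree adj \<longleftrightarrow> (\<forall>u w. adj u w \<longrightarrow> adj w u) \<and> (\<forall>u. \<not> adj u u) \<and>
     (\<forall>u w. adj\<^sup>*\<^sup>* u w) \<and> \<not> (\<exists>xs. is_cycle adj xs)"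

definition arcs_out :: "('v \<Rightarrow> 'v \<Rightarrow> bool) \<Rightarrow> 'v \<Rightarrow> ('v \<times> 'v) set" where
  "arcs_out adj v = {(v, w) | w. adj v w}"

definition arcs_in :: "('v \<Rightarrow> 'v \<Rightarrow> bool) \<Rightarrow> 'v \<Rightarrow> ('v \<times> 'v) set" where
  "arcs_in adj v = {(w, v) | w. adj w v}"

text \<open>Biregular tree with natural bipartition VX, VY (VX-vertices adjacent only to VY-vertices);
the valencies are forced by the legal colouring.\<close>
definition biregular_tree_bip :: "('v \<Rightarrow> 'v \<Rightarrow> bool) \<Rightarrow> 'v set \<Rightarrow> 'v set \<Rightarrow> bool" where
  "biregular_tree_bip adj VX VY \<longleftrightarrow> is_tree adj \<and> VX \<inter> VY = {} \<and> VX \<union> VY = UNIV \<and>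
     (\<forall>u w. adj u w \<longrightarrow> (u \<in> VX \<longleftrightarrow> w \<in> VY))"

definition legal_colouring ::
  "('v \<Rightarrow> 'v \<Rightarrow> bool) \<Rightarrow> 'v set \<Rightarrow> 'v set \<Rightarrow> 'c set \<Rightarrow> 'c set \<Rightarrow> ('v \<times> 'v \<Rightarrow> 'c) \<Rightarrow> bool" where
  "legal_colouring adj VX VY X Y c \<longleftrightarrow>
     (\<forall>v\<in>VX. bij_betw c (arcs_out adj v) X) \<and>
     (\<forall>v\<in>VY. bij_betw c (arcs_out adj v) Y) \<and>
     (\<forall>v. \<forall>a\<in>arcs_in adj v. \<forall>b\<in>arcs_in adj v. c a = c b)"

definition is_aut :: "('v \<Rightarrow> 'v \<Rightarrow> bool) \<Rightarrow> ('v \<Rightarrow> 'v) \<Rightarrow> bool" where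
  "is_aut adj g \<longleftrightarrow> bij g \<and> (\<forall>u w. adj u w \<longleftrightarrow> adj (g u) (g w))"

text \<open>The local action c|A(gv) o g|A(v) o (c|A(v))^-1, as an extensional map on the colour set S.\<close>
definition local_action ::
  "('v \<Rightarrow> 'v \<Rightarrow> bool) \<Rightarrow> ('v \<times> 'v \<Rightarrow> 'c) \<Rightarrow> 'c set \<Rightarrow> ('v \<Rightarrow> 'v) \<Rightarrow> 'v \<Rightarrow> 'c \<Rightarrow> 'c" where
  "local_action adj c S g v = (\<lambda>x\<in>S. (let a = inv_into (arcs_out adj v) c x in c (g (fst a), g (snd a))))"

definition U_c ::
  "('v \<Rightarrow> 'v \<Rightarrow> bool) \<Rightarrow> 'v set \<Rightarrow> 'v set \<Rightarrow> 'c set \<Rightarrow> 'c set \<Rightarrow> ('v \<times> 'v \<Rightarrow> 'c)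
     \<Rightarrow> ('c \<Rightarrow> 'c) set \<Rightarrow> ('c \<Rightarrow> 'c) set \<Rightarrow> ('v \<Rightarrow> 'v) set" where
  "U_c adj VX VY X Y c M N = {g. is_aut adj g \<and> g ` VX = VX \<and>
      (\<forall>v\<in>VX. local_action adj c X g v \<in> M) \<and> (\<forall>v\<in>VY. local_action adj c Y g v \<in> N)}"

definition in_colour :: "('v \<Rightarrow> 'v \<Rightarrow> bool) \<Rightarrow> ('v \<times> 'v \<Rightarrow> 'c) \<Rightarrow> 'v \<Rightarrow> 'c" where
  "in_colour adj c v = c (SOME a. a \<in> arcs_in adj v)"

end

theory Submission
  imports Defs
begin


fun nbk :: "'v list \<Rightarrow> bool" where
  "nbk (x # y # z # zs) = (x \<noteq> z \<and> nbk (y # z # zs))"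
| "nbk _ = True"

lemma all_nat_split: "(\<forall>i::nat. P i) \<longleftrightarrow> P 0 \<and> (\<forall>i. P (Suc i))"
  by (metis not0_implies_Suc)

lemma nbk_nth: "nbk xs \<longleftrightarrow> (\<forall>i. Suc (Suc i) < length xs \<longrightarrow> xs ! i \<noteq> xs ! Suc (Suc i))"
proof (induction xs rule: nbk.induct)
  case (1 x y z zs)
  show ?case
    apply (subst all_nat_split)
    using 1 by simp
qed auto

lemma nbk_rev: "nbk (rev xs) = nbk xs"
proof -
  have *: "nbk (rev xs)" if "nbk xs" for xs :: "'a list"
    unfolding nbk_nth
  proof (intro allI impI)
    fix i assume i: "Suc (Suc i) < length (rev xs)"
    define n where "n = length xs"
    define j where "j = n - Suc (Suc (Suc i))"
    have jj: "Suc (Suc j) < n" "n - Suc i = Suc (Suc j)" using i unfolding j_def n_def by auto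
    have "xs ! j \<noteq> xs ! Suc (Suc j)" using that jj(1) unfolding nbk_nth n_def by blast
    moreover have "rev xs ! i = xs ! Suc (Suc j)" using i jj by (simp add: rev_nth n_def)
    moreover have "rev xs ! Suc (Suc i) = xs ! j" using i by (simp add: rev_nth n_def j_def)
    ultimately show "rev xs ! i \<noteq> rev xs ! Suc (Suc i)" by simp
  qed
  show ?thesis using *[of xs] *[of "rev xs"] by auto
qed

lemma nbk_join: "nbk (xs @ [a]) \<Longrightarrow> nbk (a # ys) \<Longrightarrow> (xs \<noteq> [] \<Longrightarrow> ys \<noteq> [] \<Longrightarrow> last xs \<noteq> hd ys)
   \<Longrightarrow> nbk (xs @ a # ys)"
proof (induction xs)
  case Nil then show ?case by simp
next
  case (Cons x xs)
  have "nbk (xs @ [a])" using Cons.prems(1) by (cases xs rule: nbk.cases) auto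
  then have IH: "nbk (xs @ a # ys)" using Cons by (cases xs) auto
  show ?case
  proof (cases xs)
    case Nil then show ?thesis using Cons.prems by (cases ys) auto
  next
    case (Cons y xs')
    then show ?thesis using Cons.prems IH by (cases xs') auto
  qed
qed

lemma nbk_tl: "nbk (x # xs) \<Longrightarrow> nbk xs"
  by (cases xs rule: nbk.cases) auto

lemma nbk_butlast: "nbk xs \<Longrightarrow> nbk (butlast xs)"
  unfolding nbk_nth by (simp add: nth_butlast)



locale tsetting =
  fixes adj :: "'v \<Rightarrow> 'v \<Rightarrow> bool" and VX VY :: "'v set" and X Y :: "'c set" and c :: "'v \<times> 'v \<Rightarrow> 'c"
  assumes bip: "biregular_tree_bip adj VX VY"
    and col: "legal_colouring adj VX VY X Y c"
    and Xne: "X \<noteq> {}" and Yne: "Y \<noteq> {}"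
begin

lemma sym: "adj u w \<Longrightarrow> adj w u" and irr: "\<not> adj u u" and conn: "adj\<^sup>*\<^sup>* u w"
  and nocyc: "\<not> is_cycle adj xs"
  using bip unfolding biregular_tree_bip_def is_tree_def by blast+

lemma VY_eq: "VY = - VX" using bip unfolding biregular_tree_bip_def by blast

lemma side: "adj u w \<Longrightarrow> (u \<in> VX \<longleftrightarrow> w \<notin> VX)"
  using bip VY_eq unfolding biregular_tree_bip_def by blast

definition cs :: "'v \<Rightarrow> 'c set" where "cs u = (if u \<in> VX then X else Y)"

lemma cs_bij: "bij_betw c (arcs_out adj u) (cs u)"
  using col VY_eq unfolding legal_colouring_def cs_def by auto

lemma cs_inj: "adj u w \<Longrightarrow> adj u w' \<Longrightarrow> c (u, w) = c (u, w') \<Longrightarrow> w = w'"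
  using cs_bij[of u] unfolding bij_betw_def inj_on_def arcs_out_def by blast

lemma cs_in: "adj u w \<Longrightarrow> c (u, w) \<in> cs u"
  using cs_bij[of u] unfolding bij_betw_def arcs_out_def by blast

definition nbr :: "'v \<Rightarrow> 'c \<Rightarrow> 'v" where
  "nbr x cl = snd (inv_into (arcs_out adj x) c cl)"

lemma nbr: assumes "cl \<in> cs x" shows "adj x (nbr x cl)" "c (x, nbr x cl) = cl"
proof -
  have im: "cl \<in> c ` arcs_out adj x" using cs_bij[of x] assms unfolding bij_betw_def by blast
  have a: "inv_into (arcs_out adj x) c cl \<in> arcs_out adj x" by (rule inv_into_into[OF im])
  then obtain y where y: "inv_into (arcs_out adj x) c cl = (x, y)" "adj x y" unfolding arcs_out_def by blast
  show "adj x (nbr x cl)" using y unfolding nbr_def by simp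
  show "c (x, nbr x cl) = cl" using f_inv_into_f[OF im] y unfolding nbr_def by simp
qed

lemma has_in: "\<exists>y. adj y x"
proof -
  have "cs x \<noteq> {}" using Xne Yne unfolding cs_def by auto
  then obtain cl where "cl \<in> cs x" by blast
  then show ?thesis using nbr(1) sym by blast
qed

lemma in_col: assumes "adj y x" shows "in_colour adj c x = c (y, x)"
proof -
  have "(y, x) \<in> arcs_in adj x" using assms unfolding arcs_in_def by blast
  then have "(SOME a. a \<in> arcs_in adj x) \<in> arcs_in adj x" by (rule someI)
  then show ?thesis using col \<open>(y, x) \<in> arcs_in adj x\<close> unfolding legal_colouring_def in_colour_def
    by blast
qed

lemma in_col_cs: "y \<in> VX \<longleftrightarrow> x \<notin> VX \<Longrightarrow> in_colour adj c x \<in> cs y"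
proof -
  assume h: "y \<in> VX \<longleftrightarrow> x \<notin> VX"
  obtain z where z: "adj z x" using has_in by blast
  have "in_colour adj c x = c (z, x)" using in_col[OF z] .
  moreover have "c (z, x) \<in> cs z" using cs_in[OF z] .
  moreover have "cs z = cs y" using side[OF z] h unfolding cs_def by auto
  ultimately show ?thesis by simp
qed

definition walk :: "'v list \<Rightarrow> bool" where "walk = successively adj"

lemma cyc: "walk xs \<Longrightarrow> nbk xs \<Longrightarrow> \<not> distinct xs \<Longrightarrow> False"
proof (induction "length xs" arbitrary: xs rule: less_induct)
  case less
  have ne: "xs \<noteq> []" using less.prems by auto
  show False
  proof (cases "distinct (tl xs)")
    case False
    have "walk (tl xs)" "nbk (tl xs)" using less.prems ne unfolding walk_def
      by (cases xs; auto simp: successively_Cons intro: nbk_tl)+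
    then show False using less.hyps[of "tl xs"] False ne by auto
  next
    case T: True
    show False
    proof (cases "distinct (butlast xs)")
      case False
      have "walk (butlast xs)" using less.prems ne unfolding walk_def
        by (metis append_butlast_last_id successively_append_iff)
      moreover have "nbk (butlast xs)" using less.prems nbk_butlast by blast
      ultimately show False using less.hyps[of "butlast xs"] False ne by auto
    next
      case B: True
      obtain a ys where xs: "xs = a # ys" using ne by (cases xs) auto
      have "a \<in> set ys" using less.prems(3) T xs by auto
      have "a = last ys"
      proof (rule ccontr)
        assume "a \<noteq> last ys"
        then have "a \<in> set (butlast ys)" using \<open>a \<in> set ys\<close>
          by (metis append_butlast_last_id in_set_butlast_appendI empty_iff empty_set
              last_in_set list.set_cases rotate1.simps(2) set_rotate1 set_ConsD)
        then show False using B xs by (cases ys) auto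
      qed
      have ys_ne: "ys \<noteq> []" using \<open>a \<in> set ys\<close> by auto
      define n where "n = length xs"
      have n2: "n \<ge> 2" using ys_ne xs n_def by (cases ys) auto
      have xs0: "xs ! 0 = xs ! (n - 1)" using \<open>a = last ys\<close> xs ys_ne n_def by (simp add: last_conv_nth)
      have wk: "\<And>i. Suc i < n \<Longrightarrow> adj (xs ! i) (xs ! Suc i)"
        using less.prems(1) n_def unfolding walk_def successively_conv_nth by blast
      have nb: "\<And>i. Suc (Suc i) < n \<Longrightarrow> xs ! i \<noteq> xs ! Suc (Suc i)"
        using less.prems(2) n_def unfolding nbk_nth by blast
      have "n \<noteq> 2" using wk[of 0] xs0 irr by (metis One_nat_def diff_Suc_1 lessI numeral_2_eq_2)
      moreover have "n \<noteq> 3" using nb[of 0] xs0 by (metis Suc_1 diff_Suc_1 lessI numeral_3_eq_3)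
      ultimately have n4: "n \<ge> 4" using n2 by linarith
      define zs where "zs = butlast xs"
      have lz: "length zs = n - 1" using zs_def n_def by simp
      have zn: "\<And>i. i < n - 1 \<Longrightarrow> zs ! i = xs ! i" using zs_def n_def by (simp add: nth_butlast)
      have "is_cycle adj zs" unfolding is_cycle_def
      proof (intro conjI allI impI)
        show "3 \<le> length zs" using lz n4 by simp
        show "distinct zs" using B zs_def by simp
        fix i assume i: "i < length zs"
        show "adj (zs ! i) (zs ! ((i + 1) mod length zs))"
        proof (cases "i + 1 < length zs")
          case True
          then show ?thesis using wk[of i] zn lz i by simp
        next
          case False
          then have i1: "i + 1 = length zs" using i by simp
          then have "i = n - 2" "(i + 1) mod length zs = 0" using lz by auto
          then have im: "i = n - 2" and md: "(i + 1) mod length zs = 0" by auto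
          have s2: "Suc (n - 2) = n - 1" using n4 by simp
          have a1: "adj (xs ! (n - 2)) (xs ! (n - 1))" using wk[of "n - 2"] n4 s2 by simp
          have a2: "zs ! i = xs ! (n - 2)" using zn[of "n - 2"] im n4 by simp
          have a3: "zs ! ((i + 1) mod length zs) = xs ! (n - 1)" using md zn[of 0] xs0 n4 by simp
          show ?thesis using a1 a2 a3 by simp
        qed
      qed
      then show False using nocyc by blast
    qed
  qed
qed

end

context tsetting begin

lemma walk_Cons: "walk (x # y # zs) \<longleftrightarrow> adj x y \<and> walk (y # zs)"
  unfolding walk_def by simp

lemma walk_tl: "walk (x # xs) \<Longrightarrow> walk xs"
  unfolding walk_def by (auto simp add: successively_Cons)

lemma closed_bad: "walk (a # ys) \<Longrightarrow> nbk (a # ys) \<Longrightarrow> ys \<noteq> [] \<Longrightarrow> last ys = a \<Longrightarrow> False"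
  using cyc[of "a # ys"] by (metis distinct.simps(2) last_in_set)

lemma uniq: "walk P \<Longrightarrow> walk Q \<Longrightarrow> nbk P \<Longrightarrow> nbk Q \<Longrightarrow> P \<noteq> [] \<Longrightarrow> Q \<noteq> [] \<Longrightarrow>
  hd P = hd Q \<Longrightarrow> last P = last Q \<Longrightarrow> P = Q"
proof (induction P arbitrary: Q)
  case Nil then show ?case by simp
next
  case (Cons a P1)
  obtain Q1 where Q: "Q = a # Q1" using Cons.prems by (cases Q) auto
  show ?case
  proof (cases "P1 = []")
    case True
    show ?thesis
    proof (cases "Q1 = []")
      case True then show ?thesis using Q \<open>P1 = []\<close> by simp
    next
      case False
      have "last Q1 = a" using Cons.prems(8) Q False \<open>P1 = []\<close> by simp
      then show ?thesis using closed_bad[of a Q1] Cons.prems(2,4) Q False by simp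
    qed
  next
    case P1ne: False
    show ?thesis
    proof (cases "Q1 = []")
      case True
      then show ?thesis using closed_bad[of a P1] Cons.prems Q P1ne by auto
    next
      case Q1ne: False
      show ?thesis
      proof (cases "hd P1 = hd Q1")
        case True
        have "P1 = Q1"
        proof (rule Cons.IH)
          show "walk P1" using walk_tl[OF Cons.prems(1)] .
          show "walk Q1" using walk_tl[of a Q1] Cons.prems(2) Q by simp
          show "nbk P1" using nbk_tl[OF Cons.prems(3)] .
          show "nbk Q1" using nbk_tl[of a Q1] Cons.prems(4) Q by simp
          show "last P1 = last Q1" using Cons.prems(8) Q P1ne Q1ne by simp
        qed (use P1ne Q1ne True in auto)
        then show ?thesis using Q by simp
      next
        case False
        define W where "W = rev Q1 @ a # P1"
        have wQ: "walk (a # Q1)" and wP: "walk (a # P1)" using Cons.prems Q by auto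
        have "walk W" unfolding W_def walk_def successively_append_iff
        proof (intro conjI disjI2)
          show "successively adj (rev Q1)" using wQ unfolding walk_def
            by (auto simp: successively_Cons sym intro: successively_mono)
          show "successively adj (a # P1)" using wP unfolding walk_def .
          show "adj (last (rev Q1)) (hd (a # P1))" using wQ Q1ne
            by (cases Q1) (auto simp: walk_Cons sym)
        qed
        moreover have "nbk W" unfolding W_def
        proof (rule nbk_join)
          have "nbk (rev (a # Q1))" using Cons.prems Q nbk_rev by blast
          then show "nbk (rev Q1 @ [a])" by simp
          show "nbk (a # P1)" using Cons.prems by simp
          show "last (rev Q1) \<noteq> hd P1" using False Q1ne by (simp add: last_rev)
        qed
        moreover have "\<not> distinct W"
        proof -
          have "last Q1 = last P1" using Cons.prems Q P1ne Q1ne by simp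
          moreover have "last Q1 \<in> set (rev Q1)" using Q1ne by simp
          moreover have "last P1 \<in> set (a # P1)" using P1ne by simp
          ultimately have "set (rev Q1) \<inter> set (a # P1) \<noteq> {}" by (metis disjoint_iff)
          then show ?thesis unfolding W_def by (simp only: distinct_append) blast
        qed
        ultimately show ?thesis using cyc by blast
      qed
    qed
  qed
qed

lemma exist_path: "\<exists>P. walk P \<and> nbk P \<and> P \<noteq> [] \<and> hd P = u \<and> last P = r"
  using conn[of u r]
proof (induction rule: converse_rtranclp_induct)
  case base
  then show ?case by (intro exI[of _ "[r]"]) (simp add: walk_def)
next
  case (step x y)
  then obtain P where P: "walk P" "nbk P" "P \<noteq> []" "hd P = y" "last P = r" by blast
  then obtain P1 where P1: "P = y # P1" by (cases P) auto
  show ?case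
  proof (cases "P1 \<noteq> [] \<and> hd P1 = x")
    case True
    then show ?thesis using P P1 walk_tl nbk_tl by (intro exI[of _ P1]) auto
  next
    case False
    have "walk (x # P)" using P P1 step(1) by (simp add: walk_Cons)
    moreover have "nbk (x # P)" using P P1 False by (cases P1) auto
    ultimately show ?thesis using P by (intro exI[of _ "x # P"]) auto
  qed
qed

end


locale cons = tsetting adj VX VY X Y c
  for adj :: "'v \<Rightarrow> 'v \<Rightarrow> bool" and VX VY :: "'v set" and X Y :: "'c set" and c :: "'v \<times> 'v \<Rightarrow> 'c" +
  fixes fX fY :: "'c \<Rightarrow> 'c" and r r' :: 'v
  assumes fX: "bij_betw fX X X" and fY: "bij_betw fY Y Y"
    and rside: "r' \<in> VX \<longleftrightarrow> r \<in> VX"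
    and rin: "in_colour adj c r' = (if r \<in> VX then fY else fX) (in_colour adj c r)"
begin

definition phi :: "'v \<Rightarrow> 'c \<Rightarrow> 'c" where "phi u cl = (if u \<in> VX then fX cl else fY cl)"
definition oth :: "'v \<Rightarrow> 'c \<Rightarrow> 'c" where "oth u cl = (if u \<in> VX then fY cl else fX cl)"

lemma phi_cs: "cl \<in> cs u \<Longrightarrow> phi u cl \<in> cs u"
  using fX fY unfolding phi_def cs_def bij_betw_def by auto

fun trw :: "'v list \<Rightarrow> 'v" where
  "trw [] = r'" | "trw [x] = r'" | "trw (w # u # rest) = nbr (trw (u # rest)) (phi u (c (u, w)))"

lemma trw_inv: "walk xs \<Longrightarrow> xs \<noteq> [] \<Longrightarrow> last xs = r \<Longrightarrow>
  (trw xs \<in> VX \<longleftrightarrow> hd xs \<in> VX) \<and> in_colour adj c (trw xs) = oth (hd xs) (in_colour adj c (hd xs))"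
proof (induction xs rule: trw.induct)
  case 1 then show ?case by simp
next
  case (2 x) then show ?case using rside rin unfolding oth_def by simp
next
  case (3 w u rest)
  have a: "adj w u" and wk: "walk (u # rest)" using "3.prems" by (auto simp: walk_Cons)
  have IH: "(trw (u # rest) \<in> VX \<longleftrightarrow> u \<in> VX)" 
    "in_colour adj c (trw (u # rest)) = oth u (in_colour adj c u)"
    using "3.IH" wk "3.prems" by auto
  have cl: "phi u (c (u, w)) \<in> cs (trw (u # rest))"
    using phi_cs[OF cs_in[OF sym[OF a]]] IH(1) unfolding cs_def by simp
  note n = nbr[OF cl]
  have s1: "trw (w # u # rest) \<in> VX \<longleftrightarrow> w \<in> VX"
    using side[OF n(1)] side[OF a] IH(1) by auto
  have "in_colour adj c (trw (w # u # rest)) = phi u (c (u, w))"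
    using in_col[OF n(1)] n(2) by simp
  also have "\<dots> = oth w (in_colour adj c w)"
    using in_col[OF sym[OF a]] side[OF a] unfolding phi_def oth_def by auto
  finally show ?case using s1 by simp
qed

definition path :: "'v \<Rightarrow> 'v list" where
  "path u = (SOME P. walk P \<and> nbk P \<and> P \<noteq> [] \<and> hd P = u \<and> last P = r)"

lemma path: "walk (path u)" "nbk (path u)" "path u \<noteq> []" "hd (path u) = u" "last (path u) = r"
  using someI_ex[OF exist_path[of u r]] unfolding path_def by blast+

lemma path_eq: "walk P \<Longrightarrow> nbk P \<Longrightarrow> P \<noteq> [] \<Longrightarrow> hd P = u \<Longrightarrow> last P = r \<Longrightarrow> path u = P"
  using uniq[of "path u" P] path[of u] by auto

definition g :: "'v \<Rightarrow> 'v" where "g u = trw (path u)"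

lemma g_inv: "(g x \<in> VX \<longleftrightarrow> x \<in> VX)" "in_colour adj c (g x) = oth x (in_colour adj c x)"
  using trw_inv[OF path(1,3,5)] path(4) unfolding g_def by auto

lemma g_r: "g r = r'"
proof -
  have "path r = [r]" by (rule path_eq) (auto simp: walk_def)
  then show ?thesis unfolding g_def by simp
qed

lemma g_law: assumes a: "adj u w" shows "adj (g u) (g w) \<and> c (g u, g w) = phi u (c (u, w))"
proof -
  obtain P1 where P: "path u = u # P1" using path(3,4)[of u] by (cases "path u") auto
  show ?thesis
  proof (cases "P1 \<noteq> [] \<and> hd P1 = w")
    case True
    then obtain rest where P1: "P1 = w # rest" by (cases P1) auto
    have pw: "path w = w # rest"
      using path[of u] P P1 walk_tl nbk_tl by (intro path_eq) auto
    have wu: "adj w u" using sym[OF a] .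
    have cl: "phi w (c (w, u)) \<in> cs (g w)"
      using phi_cs[OF cs_in[OF wu]] g_inv(1)[of w] unfolding cs_def by simp
    have gu: "g u = nbr (g w) (phi w (c (w, u)))" unfolding g_def using P P1 pw by simp
    have ad: "adj (g w) (g u)" using nbr(1)[OF cl] gu by simp
    have "c (g u, g w) = in_colour adj c (g w)" using in_col[OF sym[OF ad]] by simp
    also have "\<dots> = oth w (c (u, w))" using g_inv(2)[of w] in_col[OF a] by simp
    also have "\<dots> = phi u (c (u, w))" using side[OF a] unfolding oth_def phi_def by auto
    finally show ?thesis using sym[OF ad] by simp
  next
    case False
    have pw: "path w = w # path u"
    proof (rule path_eq)
      show "walk (w # path u)" using path(1)[of u] P sym[OF a] by (simp add: walk_Cons)
      show "nbk (w # path u)" using path(2)[of u] P False by (cases P1) auto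
    qed (use path[of u] in auto)
    have cl: "phi u (c (u, w)) \<in> cs (g u)"
      using phi_cs[OF cs_in[OF a]] g_inv(1)[of u] unfolding cs_def by simp
    have gw: "g w = nbr (g u) (phi u (c (u, w)))" unfolding g_def using P pw by simp
    show ?thesis using nbr[OF cl] gw by simp
  qed
qed

lemma construct: "\<exists>g. g r = r' \<and> (\<forall>x. g x \<in> VX \<longleftrightarrow> x \<in> VX) \<and>
   (\<forall>u w. adj u w \<longrightarrow> adj (g u) (g w) \<and> c (g u, g w) = phi u (c (u, w)))"
  using g_r g_inv(1) g_law by blast

end

context tsetting begin

lemma rigid: assumes "f s = s" and "\<And>u w. adj u w \<Longrightarrow> adj (f u) (f w) \<and> c (f u, f w) = c (u, w)"
  shows "f x = x"
  using conn[of s x]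
proof (induction rule: rtranclp_induct)
  case base then show ?case using assms(1) .
next
  case (step y z)
  have "adj y (f z)" "c (y, f z) = c (y, z)" using assms(2)[OF step(2)] step(3) by auto
  then show ?case using cs_inj[OF _ step(2)] by blast
qed

lemma in_cs: "in_colour adj c x \<in> (if x \<in> VX then Y else X)"
proof -
  obtain z where z: "adj z x" using has_in by blast
  have "in_colour adj c x = c (z, x)" using in_col[OF z] .
  moreover have "c (z, x) \<in> cs z" using cs_in[OF z] .
  ultimately show ?thesis using side[OF z] unfolding cs_def by (auto split: if_splits)
qed

lemma constr:
  assumes "bij_betw fX X X" "bij_betw fY Y Y" "r' \<in> VX \<longleftrightarrow> r \<in> VX"
    "in_colour adj c r' = (if r \<in> VX then fY else fX) (in_colour adj c r)"
  shows "\<exists>g. g r = r' \<and> (\<forall>x. g x \<in> VX \<longleftrightarrow> x \<in> VX) \<and>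
   (\<forall>u w. adj u w \<longrightarrow> adj (g u) (g w) \<and> c (g u, g w) = (if u \<in> VX then fX else fY) (c (u, w)))"
proof -
  have C: "cons adj VX VY X Y c fX fY r r'"
    by (intro cons.intro cons_axioms.intro tsetting_axioms assms)
  have e: "\<And>u x. cons.phi VX fX fY u x = (if u \<in> VX then fX else fY) x"
    by (simp add: cons.phi_def[OF C])
  show ?thesis using cons.construct[OF C] unfolding e .
qed

lemma aut:
  assumes fX: "bij_betw fX X X" and fY: "bij_betw fY Y Y" and rs: "r' \<in> VX \<longleftrightarrow> r \<in> VX"
    and ri: "in_colour adj c r' = (if r \<in> VX then fY else fX) (in_colour adj c r)"
  shows "\<exists>g. is_aut adj g \<and> g r = r' \<and> g ` VX = VX \<and>
   (\<forall>u w. adj u w \<longrightarrow> c (g u, g w) = (if u \<in> VX then fX else fY) (c (u, w)))"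
proof -
  obtain g where g: "g r = r'" "\<And>x. g x \<in> VX \<longleftrightarrow> x \<in> VX"
    "\<And>u w. adj u w \<Longrightarrow> adj (g u) (g w) \<and> c (g u, g w) = (if u \<in> VX then fX else fY) (c (u, w))"
    using constr[OF fX fY rs ri] by blast
  define iX where "iX = inv_into X fX"
  define iY where "iY = inv_into Y fY"
  have iX: "bij_betw iX X X" and iY: "bij_betw iY Y Y"
    using fX fY bij_betw_inv_into unfolding iX_def iY_def by blast+
  have ri': "in_colour adj c r = (if r' \<in> VX then iY else iX) (in_colour adj c r')"
    using ri in_cs[of r] rs fX fY unfolding iX_def iY_def
    by (auto simp: bij_betw_def inv_into_f_f)
  obtain h where h: "h r' = r" "\<And>x. h x \<in> VX \<longleftrightarrow> x \<in> VX"
    "\<And>u w. adj u w \<Longrightarrow> adj (h u) (h w) \<and> c (h u, h w) = (if u \<in> VX then iX else iY) (c (u, w))"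
    using constr[OF iX iY rs[symmetric] ri'] by blast
  have hg: "h (g x) = x" for x
  proof (rule rigid[of "h \<circ> g" r, simplified])
    show "h (g r) = r" using g h by simp
    fix u w assume a: "adj u w"
    have cu: "c (u, w) \<in> (if u \<in> VX then X else Y)" using cs_in[OF a] unfolding cs_def .
    show "adj (h (g u)) (h (g w)) \<and> c (h (g u), h (g w)) = c (u, w)"
      using h(3)[of "g u" "g w"] g(3)[OF a] g(2)[of u] cu fX fY unfolding iX_def iY_def
      by (auto simp: bij_betw_def inv_into_f_f split: if_splits)
  qed
  have gh: "g (h x) = x" for x
  proof (rule rigid[of "g \<circ> h" r', simplified])
    show "g (h r') = r'" using g h by simp
    fix u w assume a: "adj u w"
    have cu: "c (u, w) \<in> (if u \<in> VX then X else Y)" using cs_in[OF a] unfolding cs_def .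
    show "adj (g (h u)) (g (h w)) \<and> c (g (h u), g (h w)) = c (u, w)"
      using g(3)[of "h u" "h w"] h(3)[OF a] h(2)[of u] cu fX fY unfolding iX_def iY_def
      by (auto simp: bij_betw_def bij_betw_inv_into_right split: if_splits)
  qed
  have "bij g" using hg gh by (metis bijI injI surjI)
  moreover have "adj u w \<longleftrightarrow> adj (g u) (g w)" for u w
    using g(3)[of u w] h(3)[of "g u" "g w"] hg by auto
  moreover have "g ` VX = VX"
  proof
    show "g ` VX \<subseteq> VX" using g(2) by auto
    show "VX \<subseteq> g ` VX"
    proof
      fix x assume "x \<in> VX"
      then have "h x \<in> VX" using h(2) by simp
      then show "x \<in> g ` VX" using gh[of x] by (metis image_eqI)
    qed
  qed
  ultimately show ?thesis using g(1) g(3) unfolding is_aut_def by blast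
qed

end

context tsetting begin

lemma la_val: assumes "adj u w"
  shows "local_action adj c (cs u) g u (c (u, w)) = c (g u, g w)"
proof -
  have "inj_on c (arcs_out adj u)" using cs_bij[of u] unfolding bij_betw_def by blast
  moreover have "(u, w) \<in> arcs_out adj u" using assms unfolding arcs_out_def by blast
  ultimately have "inv_into (arcs_out adj u) c (c (u, w)) = (u, w)" by (rule inv_into_f_f)
  then show ?thesis using cs_in[OF assms] unfolding local_action_def by simp
qed

lemma la_eq: assumes "\<And>w. adj u w \<Longrightarrow> c (g u, g w) = f (c (u, w))"
  shows "local_action adj c (cs u) g u = restrict f (cs u)"
proof
  fix x show "local_action adj c (cs u) g u x = restrict f (cs u) x"
  proof (cases "x \<in> cs u")
    case True
    have "x \<in> c ` arcs_out adj u" using cs_bij[of u] True by (simp add: bij_betw_def)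
    then obtain a where "a \<in> arcs_out adj u" "c a = x" by blast
    then obtain w where w: "adj u w" "x = c (u, w)" unfolding arcs_out_def by blast
    then show ?thesis using la_val[OF w(1)] assms[OF w(1)] True by simp
  next
    case False then show ?thesis unfolding local_action_def by simp
  qed
qed

lemma only_if: assumes g: "g \<in> U_c adj VX VY X Y c M N"
  shows "\<exists>\<sigma>\<in>(if v \<in> VX then N else M). \<sigma> (in_colour adj c v) = in_colour adj c (g v)"
proof -
  obtain w where w: "adj w v" using has_in by blast
  have aut: "is_aut adj g" using g unfolding U_c_def by blast
  have "local_action adj c (cs w) g w \<in> (if w \<in> VX then M else N)"
    using g VY_eq unfolding U_c_def cs_def by auto
  moreover have "(if w \<in> VX then M else N) = (if v \<in> VX then N else M)" using side[OF w] by auto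
  moreover have "local_action adj c (cs w) g w (in_colour adj c v) = in_colour adj c (g v)"
    using la_val[OF w] in_col[OF w] in_col[of "g w" "g v"] aut w unfolding is_aut_def by auto
  ultimately show ?thesis by metis
qed

end

context tsetting begin

lemma if_dir:
  assumes M: "subgroup M (BijGroup X)" and N: "subgroup N (BijGroup Y)"
    and vs: "v' \<in> VX \<longleftrightarrow> v \<in> VX"
    and s: "\<sigma> \<in> (if v \<in> VX then N else M)" "\<sigma> (in_colour adj c v) = in_colour adj c v'"
  shows "\<exists>g\<in>U_c adj VX VY X Y c M N. g v = v'"
proof -
  define fX where "fX = (if v \<in> VX then (\<lambda>x. x) else \<sigma>)"
  define fY where "fY = (if v \<in> VX then \<sigma> else (\<lambda>x. x))"
  have sB: "\<sigma> \<in> Bij (if v \<in> VX then Y else X)"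
    using s(1) subgroup.subset[OF M] subgroup.subset[OF N] by (auto simp: BijGroup_def split: if_splits)
  have fX: "bij_betw fX X X" and fY: "bij_betw fY Y Y"
    using sB bij_betw_id unfolding fX_def fY_def Bij_def id_def by (auto split: if_splits)
  have ri: "in_colour adj c v' = (if v \<in> VX then fY else fX) (in_colour adj c v)"
    using s(2) unfolding fX_def fY_def by simp
  obtain g where g: "is_aut adj g" "g v = v'" "g ` VX = VX"
    "\<And>u w. adj u w \<Longrightarrow> c (g u, g w) = (if u \<in> VX then fX else fY) (c (u, w))"
    using aut[OF fX fY vs ri] by blast
  have oneX: "(\<lambda>x\<in>X. x) \<in> M" using subgroup.one_closed[OF M] by (simp add: BijGroup_def)
  have oneY: "(\<lambda>x\<in>Y. x) \<in> N" using subgroup.one_closed[OF N] by (simp add: BijGroup_def)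
  have "g \<in> U_c adj VX VY X Y c M N" unfolding U_c_def
  proof (intro CollectI conjI ballI)
    show "is_aut adj g" "g ` VX = VX" using g by auto
    fix u
    show "u \<in> VX \<Longrightarrow> local_action adj c X g u \<in> M"
    proof -
      assume u: "u \<in> VX"
      have "local_action adj c (cs u) g u = restrict fX (cs u)"
        by (rule la_eq) (use g(4) u in auto)
      then have "local_action adj c X g u = restrict fX X" using u unfolding cs_def by simp
      also have "\<dots> \<in> M"
      proof (cases "v \<in> VX")
        case True then show ?thesis using oneX unfolding fX_def by simp
      next
        case False
        then have "restrict fX X = \<sigma>" using sB unfolding fX_def Bij_def
          by (simp add: extensional_restrict)
        then show ?thesis using s(1) False by simp
      qed
      finally show ?thesis .
    qed
    show "u \<in> VY \<Longrightarrow> local_action adj c Y g u \<in> N"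
    proof -
      assume u: "u \<in> VY"
      then have uX: "u \<notin> VX" using VY_eq by auto
      have "local_action adj c (cs u) g u = restrict fY (cs u)"
        by (rule la_eq) (use g(4) uX in auto)
      then have "local_action adj c Y g u = restrict fY Y" using uX unfolding cs_def by simp
      also have "\<dots> \<in> N"
      proof (cases "v \<in> VX")
        case False then show ?thesis using oneY unfolding fY_def by simp
      next
        case True
        then have "restrict fY Y = \<sigma>" using sB unfolding fY_def Bij_def
          by (simp add: extensional_restrict)
        then show ?thesis using s(1) True by simp
      qed
      finally show ?thesis .
    qed
  qed
  then show ?thesis using g(2) by blast
qed

end

theorem proposition3p4:
  fixes adj :: "'v \<Rightarrow> 'v \<Rightarrow> bool"
    and VX VY :: "'v set"
    and X Y :: "'c set"
    and c :: "'v \<times> 'v \<Rightarrow> 'c"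
    and M N :: "('c \<Rightarrow> 'c) set"
  assumes "X \<inter> Y = {}"
    and "\<exists>a b. a \<in> X \<and> b \<in> X \<and> a \<noteq> b"
    and "\<exists>a b. a \<in> Y \<and> b \<in> Y \<and> a \<noteq> b"
    and "subgroup M (BijGroup X)" and "M \<noteq> {\<one>\<^bsub>BijGroup X\<^esub>}"
    and "subgroup N (BijGroup Y)" and "N \<noteq> {\<one>\<^bsub>BijGroup Y\<^esub>}"
    and "biregular_tree_bip adj VX VY"
    and "legal_colouring adj VX VY X Y c"
  shows "(\<forall>v\<in>VX. \<forall>v'\<in>VX. (\<exists>g\<in>U_c adj VX VY X Y c M N. g v = v') \<longleftrightarrow>
                (\<exists>\<sigma>\<in>N. \<sigma> (in_colour adj c v) = in_colour adj c v'))
       \<and> (\<forall>v\<in>VY. \<forall>v'\<in>VY. (\<exists>g\<in>U_c adj VX VY X Y c M N. g v = v') \<longleftrightarrow>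
                (\<exists>\<sigma>\<in>M. \<sigma> (in_colour adj c v) = in_colour adj c v'))"
proof -
  interpret T: tsetting adj VX VY X Y c
    using assms(2,3,8,9) by unfold_locales auto
  have VY: "VY = - VX" by (rule T.VY_eq)
  show ?thesis
  proof (intro conjI ballI iffI)
    fix v v' assume v: "v \<in> VX" "v' \<in> VX"
    { assume "\<exists>g\<in>U_c adj VX VY X Y c M N. g v = v'"
      then show "\<exists>\<sigma>\<in>N. \<sigma> (in_colour adj c v) = in_colour adj c v'" using T.only_if v by fastforce }
    { assume "\<exists>\<sigma>\<in>N. \<sigma> (in_colour adj c v) = in_colour adj c v'"
      then show "\<exists>g\<in>U_c adj VX VY X Y c M N. g v = v'" using T.if_dir[OF assms(4,6)] v by auto }
  next
    fix v v' assume v: "v \<in> VY" "v' \<in> VY"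
    then have vX: "v \<notin> VX" "v' \<notin> VX" using VY by auto
    { assume "\<exists>g\<in>U_c adj VX VY X Y c M N. g v = v'"
      then show "\<exists>\<sigma>\<in>M. \<sigma> (in_colour adj c v) = in_colour adj c v'" using T.only_if vX by fastforce }
    { assume "\<exists>\<sigma>\<in>M. \<sigma> (in_colour adj c v) = in_colour adj c v'"
      then show "\<exists>g\<in>U_c adj VX VY X Y c M N. g v = v'" using T.if_dir[OF assms(4,6)] vX by auto }
  qed
qed

end
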